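(* Let $\delta>0$, $\gamma>0$ and let $\bar{\mathcal X}^{\delta,\gamma}(t)=\bar M(I_{\delta,\gamma}(t))$. Its Lévy measure $\Pi^{\bar{\mathcal X}}$ is given, for $A_1,\dots,A_q\subseteq\mathbb{N}_0$, by $$\Pi^{\bar{\mathcal X}}(A_1\times\cdots\times A_q)=\frac{\delta\sqrt{2\lambda+\gamma^2}}{2\sqrt\pi}\sum_{\bar n\succ\bar0}\ \sum_{\substack{\Omega(k_i,n_i)\\ i=1,\dots,q}}\Gamma\Big(\sum_{i=1}^q\sum_{j=1}^{k_i}n_{ij}-\frac12\Big)\prod_{i=1}^q\prod_{j=1}^{k_i}\Big(\frac{2\lambda_{ij}}{2\lambda+\gamma^2}\Big)^{n_{ij}}\frac{\mathbb{I}_{\{n_i\in A_i\}}}{n_{ij}!}.$$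
   Context: Fix $q\ge1$, integers $k_1,\dots,k_q\ge1$, $\lambda_{ij}>0$ ($1\le i\le q$, $1\le j\le k_i$), $\lambda=\sum_{i,j}\lambda_{ij}$. The MGCP $\bar M(t)=(M_1(t),\dots,M_q(t))$ is the $\mathbb{N}_0^q$-valued Lévy process with $\bar M(0)=\bar0$, independent components and $\Pr\{\bar M(t)=\bar n\}=\prod_{i=1}^q\sum_{\Omega(k_i,n_i)}\prod_{j=1}^{k_i}\frac{(\lambda_{ij}t)^{n_{ij}}}{n_{ij}!}e^{-\lambda_{ij}t}$. $\{I_{\delta,\gamma}(t)\}$ is an inverse Gaussian subordinator independent of $\bar M$, with $\mathbb{E}e^{-sI_{\delta,\gamma}(t)}=\exp(-\delta t(\sqrt{2s+\gamma^2}-\gamma))$ and Lévy measure $\delta e^{-\gamma^2s/2}\,\mathrm{d}s/\sqrt{2\pi s^3}$. $\Omega(k_i,n_i)=\{(n_{i1},\dots,n_{ik_i})\in\mathbb{N}_0^{k_i}:\sum_jjn_{ij}=n_i\}$; the inner sum runs over families $(n_{ij})$ with $(n_{i1},\dots,n_{ik_i})\in\Omega(k_i,n_i)$ for each $i$. $\bar n\succ\bar0$ means $\bar n\in\mathbb{N}_0^q\setminus\{\bar0\}$. *)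

theory Defs
  imports "HOL-Probability.Probability"
begin

text \<open>Vectors in N_0^q are functions nat => nat vanishing at indices i >= q.\<close>
definition vecs :: "nat \<Rightarrow> (nat \<Rightarrow> nat) set" where
  "vecs q = {n. \<forall>i\<ge>q. n i = 0}"

definition posvecs :: "nat \<Rightarrow> (nat \<Rightarrow> nat) set" where
  "posvecs q = vecs q - {(\<lambda>_. 0)}"

definition Omega :: "nat \<Rightarrow> nat \<Rightarrow> (nat \<Rightarrow> nat) set" where
  "Omega k m = {v. (\<forall>j. (j < 1 \<or> k < j) \<longrightarrow> v j = 0) \<and> (\<Sum>j=1..k. j * v j) = m}"

definition Omega_fam :: "nat \<Rightarrow> (nat \<Rightarrow> nat) \<Rightarrow> (nat \<Rightarrow> nat) \<Rightarrow> (nat \<Rightarrow> nat \<Rightarrow> nat) set" where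
  "Omega_fam q k n = {nn. (\<forall>i<q. nn i \<in> Omega (k i) (n i)) \<and> (\<forall>i\<ge>q. nn i = (\<lambda>_. 0))}"

definition lam_total :: "nat \<Rightarrow> (nat \<Rightarrow> nat) \<Rightarrow> (nat \<Rightarrow> nat \<Rightarrow> real) \<Rightarrow> real" where
  "lam_total q k lam = (\<Sum>i<q. \<Sum>j=1..k i. lam i j)"

text \<open>The MGCP marginal pmf Pr{M(t) = n}.\<close>
definition mgcp_pmf :: "nat \<Rightarrow> (nat \<Rightarrow> nat) \<Rightarrow> (nat \<Rightarrow> nat \<Rightarrow> real) \<Rightarrow> real \<Rightarrow> (nat \<Rightarrow> nat) \<Rightarrow> real" where
  "mgcp_pmf q k lam t n =
     (if n \<in> vecs q then
        (\<Prod>i<q. \<Sum>v\<in>Omega (k i) (n i).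
            \<Prod>j=1..k i. (lam i j * t) ^ (v j) / fact (v j) * exp (- lam i j * t))
      else 0)"

text \<open>Marginal pmf of the subordinated process X(t) = M(I(t)), with M and I independent,
  where mu t is the law of I(t): Pr{X(t) = n} = integral of Pr{M(s) = n} w.r.t. mu t (ds).\<close>
definition sub_pmf :: "nat \<Rightarrow> (nat \<Rightarrow> nat) \<Rightarrow> (nat \<Rightarrow> nat \<Rightarrow> real) \<Rightarrow> (real \<Rightarrow> real measure)
                        \<Rightarrow> real \<Rightarrow> (nat \<Rightarrow> nat) \<Rightarrow> real" where
  "sub_pmf q k lam \<mu> t n = (\<integral>s. mgcp_pmf q k lam s n \<partial>(\<mu> t))"

text \<open>Pi is the Levy measure of an N_0^q-valued Levy process with marginal pmfs P t.
  Pi is given as a function of rectangles A_1 x ... x A_q (A i for i < q); it must be a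
  (nonnegative, countably additive) measure on N_0^q minus 0 determined by its point masses,
  and satisfy the Levy-Khintchine formula (Laplace form; such processes have zero drift
  and no Gaussian part):
    E exp(-u.X(t)) = exp(-t * sum_{n succ 0} (1 - exp(-u.n)) Pi{n}).\<close>
definition is_levy_measure_Nq :: "nat \<Rightarrow> (real \<Rightarrow> (nat \<Rightarrow> nat) \<Rightarrow> real)
                                   \<Rightarrow> ((nat \<Rightarrow> nat set) \<Rightarrow> real) \<Rightarrow> bool" where
  "is_levy_measure_Nq q P Lm \<longleftrightarrow>
     (\<forall>A. ((\<lambda>n. Lm (\<lambda>i. {n i})) has_sum Lm A) {n \<in> posvecs q. \<forall>i<q. n i \<in> A i})
   \<and> (\<forall>n\<in>posvecs q. Lm (\<lambda>i. {n i}) \<ge> 0)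
   \<and> (\<forall>t\<ge>0. \<forall>u::nat \<Rightarrow> real. (\<forall>i<q. 0 \<le> u i) \<longrightarrow>
        (\<exists>S. ((\<lambda>n. (1 - exp (- (\<Sum>i<q. u i * real (n i)))) * Lm (\<lambda>i. {n i})) has_sum S) (posvecs q)
           \<and> ((\<lambda>n. P t n * exp (- (\<Sum>i<q. u i * real (n i)))) has_sum exp (- t * S)) (vecs q)))"

definition levyX :: "nat \<Rightarrow> (nat \<Rightarrow> nat) \<Rightarrow> (nat \<Rightarrow> nat \<Rightarrow> real) \<Rightarrow> real \<Rightarrow> real
                      \<Rightarrow> (nat \<Rightarrow> nat set) \<Rightarrow> real" where
  "levyX q k lam \<delta> \<gamma> A =
     \<delta> * sqrt (2 * lam_total q k lam + \<gamma>\<^sup>2) / (2 * sqrt pi) *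
     (\<Sum>\<^sub>\<infinity>n\<in>posvecs q. \<Sum>nn\<in>Omega_fam q k n.
        Gamma (real (\<Sum>i<q. \<Sum>j=1..k i. nn i j) - 1/2) *
        (\<Prod>i<q. \<Prod>j=1..k i.
           (2 * lam i j / (2 * lam_total q k lam + \<gamma>\<^sup>2)) ^ (nn i j) *
           of_bool (n i \<in> A i) / fact (nn i j)))"

end

theory Submission
  imports Defs
begin

lemma hs_to_nn:
  fixes f :: "'a \<Rightarrow> real"
  assumes "(f has_sum S) A" "\<And>x. x \<in> A \<Longrightarrow> f x \<ge> 0"
  shows "(\<integral>\<^sup>+x. ennreal (f x) \<partial>count_space A) = ennreal S"
proof -
  have "f summable_on A" using assms(1) by (auto simp: summable_on_def)
  hence "(\<lambda>x. norm (f x)) summable_on A"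
    by (rule summable_on_cong[THEN iffD1, rotated]) (use assms(2) in auto)
  hence a: "Infinite_Set_Sum.abs_summable_on f A"
    using abs_summable_equivalent[of f A] by simp
  have "(\<integral>\<^sup>+x. ennreal (f x) \<partial>count_space A) = ennreal (infsetsum f A)"
    using nn_integral_conv_infsetsum[OF a] assms(2) by auto
  also have "infsetsum f A = infsum f A" using infsetsum_infsum[OF a] .
  also have "\<dots> = S" using assms(1) by (simp add: infsumI)
  finally show ?thesis .
qed

lemma nn_to_hs:
  fixes f :: "'a \<Rightarrow> real"
  assumes "(\<integral>\<^sup>+x. ennreal (f x) \<partial>count_space A) = ennreal S" "S \<ge> 0" "\<And>x. x \<in> A \<Longrightarrow> f x \<ge> 0"
  shows "(f has_sum S) A"
proof -
  have i: "integrable (count_space A) f"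
    by (rule integrableI_nonneg) (use assms in \<open>auto simp: AE_count_space\<close>)
  hence a: "Infinite_Set_Sum.abs_summable_on f A" by (simp add: abs_summable_on_def)
  hence "(\<lambda>x. norm (f x)) summable_on A"
    using abs_summable_equivalent[of f A] by simp
  hence s: "f summable_on A"
    by (rule summable_on_cong[THEN iffD1, rotated]) (use assms(3) in auto)
  have "ennreal (infsetsum f A) = ennreal S"
    using nn_integral_conv_infsetsum[OF a] assms by auto
  hence "infsetsum f A = S" using assms(2) infsetsum_nonneg[of A f] assms(3) by simp
  hence "infsum f A = S" using infsetsum_infsum[OF a] by simp
  thus ?thesis using s by (metis has_sum_infsum)
qed

lemma tonelli_hs:
  fixes f :: "'a \<Rightarrow> 'b \<Rightarrow> real"
  assumes "countable X"
    and meas: "\<And>n. n \<in> X \<Longrightarrow> f n \<in> borel_measurable M"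
    and Gm: "G \<in> borel_measurable M"
    and ae: "AE s in M. (\<forall>n\<in>X. f n s \<ge> 0) \<and> ((\<lambda>n. f n s) has_sum G s) X"
    and Gi: "integrable M G"
  shows "((\<lambda>n. \<integral>s. f n s \<partial>M) has_sum (\<integral>s. G s \<partial>M)) X"
proof -
  have Gnn: "AE s in M. 0 \<le> G s"
    using ae by eventually_elim (auto intro: has_sum_nonneg)
  have le: "AE s in M. f n s \<le> G s" if "n \<in> X" for n
    using ae
  proof eventually_elim
    case (elim s)
    show ?case
    proof (rule has_sum_mono_neutral[where f="\<lambda>m. f m s" and a="f n s" and A="{n}" and g="\<lambda>m. f m s" and b="G s" and B=X])
      show "((\<lambda>m. f m s) has_sum f n s) {n}" using has_sum_finite[of "{n}" "\<lambda>m. f m s"] by simp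
    qed (use elim that in auto)
  qed
  have fi: "integrable M (f n)" if "n \<in> X" for n
    by (rule Bochner_Integration.integrable_bound[OF Gi meas[OF that]])
       (use le[OF that] ae in \<open>eventually_elim, auto simp: that\<close>)
  have fnn: "AE s in M. 0 \<le> f n s" if "n \<in> X" for n using ae by eventually_elim (use that in auto)
  have "(\<integral>\<^sup>+n. ennreal (\<integral>s. f n s \<partial>M) \<partial>count_space X) = (\<integral>\<^sup>+n. (\<integral>\<^sup>+s. ennreal (f n s) \<partial>M) \<partial>count_space X)"
    by (rule nn_integral_cong) (simp add: nn_integral_eq_integral[OF fi fnn])
  also have "\<dots> = (\<integral>\<^sup>+s. (\<integral>\<^sup>+n. ennreal (f n s) \<partial>count_space X) \<partial>M)"
    by (rule nn_integral_count_space_nn_integral[symmetric]) (use assms(1) meas in auto)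
  also have "\<dots> = (\<integral>\<^sup>+s. ennreal (G s) \<partial>M)"
    by (rule nn_integral_cong_AE) (use ae in \<open>eventually_elim, auto intro!: hs_to_nn\<close>)
  also have "\<dots> = ennreal (\<integral>s. G s \<partial>M)" by (rule nn_integral_eq_integral[OF Gi Gnn])
  finally show ?thesis
    by (intro nn_to_hs) (auto intro!: integral_nonneg_AE Gnn fnn)
qed


lemma has_sum_prod_PiE_nonneg:
  fixes f :: "'a \<Rightarrow> 'b \<Rightarrow> real"
  assumes "finite A"
    and "\<And>x. x \<in> A \<Longrightarrow> (f x has_sum s x) (B x)"
    and "\<And>x y. x \<in> A \<Longrightarrow> y \<in> B x \<Longrightarrow> f x y \<ge> 0"
  shows "((\<lambda>g. \<Prod>x\<in>A. f x (g x)) has_sum (\<Prod>x\<in>A. s x)) (PiE A B)"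
  using assms
proof (induction A rule: finite_induct)
  case empty
  then show ?case using has_sum_finite[of "{\<lambda>x. undefined}" "\<lambda>g::'a\<Rightarrow>'b. 1::real"] by simp
next
  case (insert a F)
  have IH: "((\<lambda>g. \<Prod>x\<in>F. f x (g x)) has_sum (\<Prod>x\<in>F. s x)) (PiE F B)"
    using insert by auto
  have fa: "(f a has_sum s a) (B a)" using insert by auto
  have pi: "PiE (insert a F) B = (\<lambda>(g,y). g(a:=y)) ` (PiE F B \<times> B a)"
    unfolding PiE_insert_eq by (subst swap_product [symmetric]) (simp add: image_image case_prod_unfold)
  have inj: "inj_on (\<lambda>(g, y). g(a := y)) (PiE F B \<times> B a)"
    using \<open>a \<notin> F\<close> by (rule inj_combinator')
  have nnF: "(\<Prod>x\<in>F. f x (p x)) \<ge> 0" if "p \<in> PiE F B" for p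
    using insert.prems(2) that by (intro prod_nonneg) (auto simp: PiE_iff)
  define H where "H = (\<lambda>(p::'a\<Rightarrow>'b, y). f a y * (\<Prod>x\<in>F. f x (p x)))"
  have inner: "((\<lambda>y. H (p, y)) has_sum (s a * (\<Prod>x\<in>F. f x (p x)))) (B a)" for p
    unfolding H_def using has_sum_cmult_left[OF fa] by simp
  have outer: "((\<lambda>p. s a * (\<Prod>x\<in>F. f x (p x))) has_sum (s a * (\<Prod>x\<in>F. s x))) (PiE F B)"
    by (rule has_sum_cmult_right[OF IH])
  have summ: "H summable_on (PiE F B \<times> B a)"
    by (rule summable_on_SigmaI[OF inner]) (use outer insert.prems(2) nnF in \<open>auto simp: H_def summable_on_def intro!: mult_nonneg_nonneg\<close>)
  have hs: "(H has_sum (s a * (\<Prod>x\<in>F. s x))) (PiE F B \<times> B a)"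
    by (rule has_sum_SigmaI[OF inner outer summ])
  have eq: "((\<lambda>g. \<Prod>x\<in>insert a F. f x (g x)) \<circ> (\<lambda>(g, y). g(a := y))) (p, y) = H (p, y)"
    if "p \<in> PiE F B" "y \<in> B a" for p y
  proof -
    have "(\<Prod>x\<in>F. f x ((p(a:=y)) x)) = (\<Prod>x\<in>F. f x (p x))"
      by (rule prod.cong) (use insert.hyps in auto)
    thus ?thesis using insert.hyps by (simp add: H_def)
  qed
  have "(((\<lambda>g. \<Prod>x\<in>insert a F. f x (g x)) \<circ> (\<lambda>(g, y). g(a := y))) has_sum (s a * (\<Prod>x\<in>F. s x))) (PiE F B \<times> B a)"
    using hs by (rule has_sum_cong[THEN iffD1, rotated]) (use eq in auto)
  hence "((\<lambda>g. \<Prod>x\<in>insert a F. f x (g x)) has_sum (s a * (\<Prod>x\<in>F. s x))) (PiE (insert a F) B)"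
    unfolding pi by (subst has_sum_reindex[OF inj])
  thus ?case using insert.hyps by simp
qed

lemma has_sum_fiber:
  fixes g :: "'a \<Rightarrow> 'c::{topological_comm_monoid_add,t3_space}"
  assumes "(g has_sum S) X" "\<And>x. x \<in> X \<Longrightarrow> h x \<in> A" "\<And>a. a \<in> A \<Longrightarrow> finite {x\<in>X. h x = a}"
  shows "((\<lambda>a. \<Sum>x\<in>{x\<in>X. h x = a}. g x) has_sum S) A"
proof -
  have inj: "inj_on snd (Sigma A (\<lambda>a. {x\<in>X. h x = a}))" by (auto simp: inj_on_def)
  have im: "snd ` (Sigma A (\<lambda>a. {x\<in>X. h x = a})) = X" using assms(2) by force
  have "((g \<circ> snd) has_sum S) (Sigma A (\<lambda>a. {x\<in>X. h x = a}))"
    using has_sum_reindex[OF inj, of g S] im assms(1) by simp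
  thus ?thesis
    by (rule has_sum_SigmaD) (use assms(3) in auto)
qed

lemma has_sum_fiber_rev:
  fixes g :: "'a \<Rightarrow> real"
  assumes "((\<lambda>a. \<Sum>x\<in>{x\<in>X. h x = a}. g x) has_sum S) A" "\<And>x. x \<in> X \<Longrightarrow> h x \<in> A"
    "\<And>a. a \<in> A \<Longrightarrow> finite {x\<in>X. h x = a}" "\<And>x. x \<in> X \<Longrightarrow> g x \<ge> 0"
  shows "(g has_sum S) X"
proof -
  have inj: "inj_on snd (Sigma A (\<lambda>a. {x\<in>X. h x = a}))" by (auto simp: inj_on_def)
  have im: "snd ` (Sigma A (\<lambda>a. {x\<in>X. h x = a})) = X" using assms(2) by force
  have inner: "((\<lambda>y. (g \<circ> snd) (a, y)) has_sum (\<Sum>x\<in>{x\<in>X. h x = a}. g x)) {x\<in>X. h x = a}" if "a \<in> A" for a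
    using assms(3)[OF that] by simp
  have summ: "(g \<circ> snd) summable_on (Sigma A (\<lambda>a. {x\<in>X. h x = a}))"
    by (rule summable_on_SigmaI[OF inner]) (use assms(1,4) in \<open>auto simp: summable_on_def\<close>)
  have "((g \<circ> snd) has_sum S) (Sigma A (\<lambda>a. {x\<in>X. h x = a}))"
    by (rule has_sum_SigmaI[OF inner assms(1) summ])
  thus ?thesis using has_sum_reindex[OF inj, of g S] im by simp
qed

definition zext :: "'a set \<Rightarrow> ('a \<Rightarrow> nat) \<Rightarrow> 'a \<Rightarrow> nat" where
  "zext I g = (\<lambda>x. if x \<in> I then g x else 0)"

lemma zext_restrict: "\<forall>x. x \<notin> I \<longrightarrow> f x = 0 \<Longrightarrow> zext I (restrict f I) = f"
  by (auto simp: zext_def fun_eq_iff)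

lemma has_sum_zext:
  fixes \<phi> :: "('a \<Rightarrow> nat) \<Rightarrow> 'c::{topological_comm_monoid_add}"
  shows "(\<phi> has_sum S) {f. \<forall>x. x \<notin> I \<longrightarrow> f x = 0} \<longleftrightarrow> ((\<lambda>g. \<phi> (zext I g)) has_sum S) (PiE I (\<lambda>_. UNIV))"
  by (rule has_sum_reindex_bij_witness[where j="\<lambda>f. restrict f I" and i="zext I"])
     (auto simp: zext_restrict, auto simp: zext_def fun_eq_iff PiE_iff extensional_def)


lemma finite_Dset: "finite P \<Longrightarrow> finite {f\<in>PiE P (\<lambda>_. UNIV). sum f P = (N::nat)}"
proof -
  assume fP: "finite P"
  have "{f\<in>PiE P (\<lambda>_. UNIV). sum f P = N} \<subseteq> PiE P (\<lambda>_. {..N})"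
  proof
    fix f assume f: "f \<in> {f\<in>PiE P (\<lambda>_. UNIV). sum f P = N}"
    have "f p \<le> N" if "p \<in> P" for p
      using f member_le_sum[of p P f] fP that by auto
    thus "f \<in> PiE P (\<lambda>_. {..N})" using f by (auto simp: PiE_iff)
  qed
  thus ?thesis by (rule finite_subset) (use fP in \<open>auto intro: finite_PiE\<close>)
qed

lemma multinomial_exp:
  fixes z :: "'a \<Rightarrow> real"
  assumes "finite P"
  shows "(\<Sum>f\<in>{f\<in>PiE P (\<lambda>_. UNIV). sum f P = (N::nat)}. \<Prod>p\<in>P. z p ^ f p / fact (f p)) = (sum z P) ^ N / fact N"
  using assms
proof (induction P arbitrary: N rule: finite_induct)
  case empty
  then show ?case by (cases N) auto
next
  case (insert a P)
  define D where "D = (\<lambda>M::nat. {f\<in>PiE P (\<lambda>_. UNIV). sum f P = M})"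
  define T where "T = (\<lambda>f. \<Prod>p\<in>P. z p ^ f p / fact (f p))"
  have "(\<Sum>f\<in>{f\<in>PiE (insert a P) (\<lambda>_. UNIV). sum f (insert a P) = N}. \<Prod>p\<in>insert a P. z p ^ f p / fact (f p))
      = (\<Sum>(m,g)\<in>Sigma {..N} (\<lambda>m. D (N - m)). z a ^ m / fact m * T g)"
  proof (rule sum.reindex_bij_witness[where i="\<lambda>(m,g). g(a:=m)" and j="\<lambda>f. (f a, f(a:=undefined))"])
    fix f assume f: "f \<in> {f\<in>PiE (insert a P) (\<lambda>_. UNIV). sum f (insert a P) = N}"
    have s: "sum f (insert a P) = f a + sum f P" using insert.hyps by simp
    have s2: "sum (f(a:=undefined)) P = sum f P"
      by (rule sum.cong) (use insert.hyps in auto)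
    show "(\<lambda>(m,g). g(a:=m)) (f a, f(a:=undefined)) = f" by simp
    show "(f a, f(a:=undefined)) \<in> Sigma {..N} (\<lambda>m. D (N - m))"
      using f s s2 insert.hyps by (auto simp: D_def PiE_iff extensional_def)
    have p: "(\<Prod>p\<in>P. z p ^ (f(a:=undefined)) p / fact ((f(a:=undefined)) p)) = (\<Prod>p\<in>P. z p ^ f p / fact (f p))"
      by (rule prod.cong) (use insert.hyps in auto)
    show "(case (f a, f(a:=undefined)) of (m, g) \<Rightarrow> z a ^ m / fact m * T g) = (\<Prod>p\<in>insert a P. z p ^ f p / fact (f p))"
      using insert.hyps p by (simp add: T_def)
  next
    fix mg assume mg: "mg \<in> Sigma {..N} (\<lambda>m. D (N - m))"
    obtain m g where e: "mg = (m, g)" by (cases mg)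
    have g: "g \<in> PiE P (\<lambda>_. UNIV)" "sum g P = N - m" "m \<le> N" using mg e by (auto simp: D_def)
    have ga: "g a = undefined" using g(1) insert.hyps by (auto simp: PiE_iff extensional_def)
    have s2: "sum (g(a:=m)) P = sum g P"
      by (rule sum.cong) (use insert.hyps in auto)
    show "(\<lambda>f. (f a, f(a:=undefined))) ((\<lambda>(m,g). g(a:=m)) mg) = mg"
      using e ga by (auto simp: fun_eq_iff)
    show "(\<lambda>(m,g). g(a:=m)) mg \<in> {f\<in>PiE (insert a P) (\<lambda>_. UNIV). sum f (insert a P) = N}"
      using e g s2 insert.hyps by (auto simp: PiE_iff extensional_def)
  qed
  also have "\<dots> = (\<Sum>m\<le>N. z a ^ m / fact m * (\<Sum>g\<in>D (N - m). T g))"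
    by (subst sum.Sigma[symmetric]) (auto simp: D_def finite_Dset insert.hyps sum_distrib_left)
  also have "\<dots> = (\<Sum>m\<le>N. z a ^ m / fact m * (sum z P ^ (N - m) / fact (N - m)))"
    using insert.IH by (simp add: D_def T_def)
  also have "\<dots> = (\<Sum>m\<le>N. real (N choose m) * z a ^ m * sum z P ^ (N - m)) / fact N"
    by (simp add: sum_divide_distrib binomial_fact field_simps)
  also have "\<dots> = (z a + sum z P) ^ N / fact N"
    by (simp add: binomial_ring)
  finally show ?case using insert.hyps by simp
qed


lemma half_not_Int: "(1/2::real) \<notin> \<int>"
proof
  assume "(1/2::real) \<in> \<int>"
  then obtain m where "(1/2::real) = of_int m" by (auto elim: Ints_cases)
  hence "(1::real) = of_int (2 * m)" by simp
  hence "(1::int) = 2 * m" by linarith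
  thus False by presburger
qed

lemma Gamma_half_gchoose:
  "Gamma (real N - 1/2) = - 2 * sqrt pi * fact N * ((1/2::real) gchoose N) * (-1) ^ N"
proof (induction N)
  case 0
  have nz: "(-1/2::real) \<notin> \<int>\<^sub>\<le>\<^sub>0"
  proof
    assume "(-1/2::real) \<in> \<int>\<^sub>\<le>\<^sub>0"
    hence "(-1/2::real) \<in> \<int>" using nonpos_Ints_subset_Ints by blast
    hence "- (-1/2::real) \<in> \<int>" by (intro Ints_minus)
    thus False using half_not_Int by simp
  qed
  have "Gamma ((-1/2::real) + 1) = (-1/2) * Gamma (-1/2)" by (rule Gamma_plus1[OF nz])
  hence "sqrt pi = (-1/2) * Gamma (-1/2::real)" using Gamma_one_half_real by simp
  hence "Gamma (-1/2::real) = - 2 * sqrt pi" by simp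
  thus ?case by simp
next
  case (Suc N)
  have nz: "(real N - 1/2) \<notin> \<int>\<^sub>\<le>\<^sub>0"
  proof
    assume "(real N - 1/2) \<in> \<int>\<^sub>\<le>\<^sub>0"
    hence "real N - 1/2 \<in> \<int>" using nonpos_Ints_subset_Ints by blast
    hence "real N - (real N - 1/2) \<in> \<int>" by (intro Ints_diff) auto
    thus False using half_not_Int by simp
  qed
  have "Gamma (real (Suc N) - 1/2) = Gamma ((real N - 1/2) + 1)" by (simp add: algebra_simps)
  also have "\<dots> = (real N - 1/2) * Gamma (real N - 1/2)" by (rule Gamma_plus1[OF nz])
  finally have g: "Gamma (real (Suc N) - 1/2) = (real N - 1/2) * Gamma (real N - 1/2)" .
  have b: "((1/2::real) gchoose Suc N) = (1/2 - real N) / (real N + 1) * ((1/2::real) gchoose N)"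
    using gbinomial_mult_1[of "1/2::real" N] by (simp add: field_simps)
  show ?case unfolding g Suc b by (simp add: field_simps)
qed

lemma gamma_series:
  fixes r :: real
  assumes "0 \<le> r" "r < 1"
  shows "((\<lambda>N. Gamma (real N - 1/2) * r ^ N / fact N) has_sum (2 * sqrt pi * (1 - sqrt (1 - r)))) {1..}"
proof -
  have "(\<lambda>n. ((1/2::real) gchoose n) * (-r)^n) sums (1 + (-r)) powr (1/2)"
    by (rule gen_binomial_real) (use assms in auto)
  hence "(\<lambda>n. (- 2 * sqrt pi) * (((1/2::real) gchoose n) * (-r)^n)) sums ((- 2 * sqrt pi) * (1 - r) powr (1/2))"
    by (intro sums_mult) simp
  also have "(\<lambda>n. (- 2 * sqrt pi) * (((1/2::real) gchoose n) * (-r)^n)) = (\<lambda>N. Gamma (real N - 1/2) * r ^ N / fact N)"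
    by (rule ext, subst Gamma_half_gchoose) (simp add: power_minus[of r] field_simps)
  also have "(1 - r) powr (1/2) = sqrt (1 - r)" using assms by (simp add: powr_half_sqrt)
  finally have s: "(\<lambda>N. Gamma (real N - 1/2) * r ^ N / fact N) sums (- 2 * sqrt pi * sqrt (1 - r))" .
  have g0: "Gamma (real 0 - 1/2) * r ^ 0 / fact 0 = - 2 * sqrt pi"
    by (subst Gamma_half_gchoose) simp
  have "(\<lambda>N. Gamma (real (Suc N) - 1/2) * r ^ Suc N / fact (Suc N)) sums (2 * sqrt pi * (1 - sqrt (1 - r)))"
    using s g0 by (subst sums_Suc_iff) (simp add: algebra_simps)
  hence "((\<lambda>N. Gamma (real (Suc N) - 1/2) * r ^ Suc N / fact (Suc N)) has_sum (2 * sqrt pi * (1 - sqrt (1 - r)))) UNIV"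
    by (rule sums_nonneg_imp_has_sum) (use assms in \<open>auto intro!: mult_nonneg_nonneg divide_nonneg_nonneg less_imp_le[OF Gamma_real_pos]\<close>)
  also have "?this \<longleftrightarrow> ?thesis"
    by (rule has_sum_reindex_bij_witness[where i="\<lambda>n. n - 1" and j="Suc"]) auto
  finally show ?thesis .
qed


lemma finite_bounded_support:
  assumes "finite I"
  shows "finite {f::'a\<Rightarrow>nat. (\<forall>x. x \<notin> I \<longrightarrow> f x = 0) \<and> (\<forall>x. f x \<le> m)}"
proof (rule finite_subset)
  show "{f::'a\<Rightarrow>nat. (\<forall>x. x \<notin> I \<longrightarrow> f x = 0) \<and> (\<forall>x. f x \<le> m)} \<subseteq> zext I ` PiE I (\<lambda>_. {..m})"
  proof
    fix f assume f: "f \<in> {f::'a\<Rightarrow>nat. (\<forall>x. x \<notin> I \<longrightarrow> f x = 0) \<and> (\<forall>x. f x \<le> m)}"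
    hence "f = zext I (restrict f I)" using zext_restrict[of I f] by simp
    moreover have "restrict f I \<in> PiE I (\<lambda>_. {..m})" using f by auto
    ultimately show "f \<in> zext I ` PiE I (\<lambda>_. {..m})" by blast
  qed
  show "finite (zext I ` PiE I (\<lambda>_. {..m}))" using assms by (intro finite_imageI finite_PiE) auto
qed

lemma exp_series_hs:
  fixes y :: real
  assumes "y \<ge> 0"
  shows "((\<lambda>n. y ^ n / fact n) has_sum exp y) UNIV"
proof -
  have "(\<lambda>n. y ^ n / fact n) sums exp y"
    using exp_converges[of y] by (simp add: divide_inverse mult.commute)
  thus ?thesis by (rule sums_nonneg_imp_has_sum) (use assms in auto)
qed

lemma PB1:
  fixes y :: "nat \<Rightarrow> real" and w :: real and K :: nat
  assumes y: "\<And>j. j \<in> {1..K} \<Longrightarrow> y j \<ge> 0" and w: "w \<ge> 0"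
  shows "((\<lambda>m. (\<Sum>v\<in>Omega K m. \<Prod>j=1..K. y j ^ v j / fact (v j) * exp (- y j)) * exp (- w * real m))
           has_sum (\<Prod>j=1..K. exp (- y j * (1 - exp (- w * real j))))) UNIV"
proof -
  define X where "X = {v::nat\<Rightarrow>nat. \<forall>j. j \<notin> {1..K} \<longrightarrow> v j = 0}"
  define \<phi> where "\<phi> = (\<lambda>j n. (y j * exp (- w * real j)) ^ n / fact n * exp (- y j))"
  define g where "g = (\<lambda>v. \<Prod>j=1..K. \<phi> j (v j))"
  have hsj: "(\<phi> j has_sum (exp (- y j * (1 - exp (- w * real j))))) UNIV" if "j \<in> {1..K}" for j
  proof -
    have "((\<lambda>n. (y j * exp (- w * real j)) ^ n / fact n) has_sum exp (y j * exp (- w * real j))) UNIV"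
      by (rule exp_series_hs) (use y[OF that] in auto)
    hence "(\<phi> j has_sum (exp (y j * exp (- w * real j)) * exp (- y j))) UNIV"
      unfolding \<phi>_def by (rule has_sum_cmult_left)
    also have "exp (y j * exp (- w * real j)) * exp (- y j) = exp (- y j * (1 - exp (- w * real j)))"
      by (simp add: exp_add[symmetric] algebra_simps)
    finally show ?thesis .
  qed
  have "((\<lambda>f. \<Prod>j\<in>{1..K}. \<phi> j (f j)) has_sum (\<Prod>j\<in>{1..K}. exp (- y j * (1 - exp (- w * real j))))) (PiE {1..K} (\<lambda>_. UNIV))"
    by (rule has_sum_prod_PiE_nonneg) (use hsj y w in \<open>auto simp: \<phi>_def\<close>)
  hence "((\<lambda>f. g (zext {1..K} f)) has_sum (\<Prod>j\<in>{1..K}. exp (- y j * (1 - exp (- w * real j))))) (PiE {1..K} (\<lambda>_. UNIV))"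
    by (rule has_sum_cong[THEN iffD1, rotated]) (auto simp: g_def zext_def intro!: prod.cong)
  hence tot: "(g has_sum (\<Prod>j=1..K. exp (- y j * (1 - exp (- w * real j))))) X"
    unfolding X_def by (subst has_sum_zext) simp
  have fib: "{v\<in>X. (\<Sum>j=1..K. j * v j) = m} = Omega K m" for m
    by (auto simp: X_def Omega_def Suc_le_eq)
  have fin: "finite {v\<in>X. (\<Sum>j=1..K. j * v j) = m}" for m
  proof (rule finite_subset[OF _ finite_bounded_support[of "{1..K}" m]])
    show "{v\<in>X. (\<Sum>j=1..K. j * v j) = m} \<subseteq> {f. (\<forall>x. x \<notin> {1..K} \<longrightarrow> f x = 0) \<and> (\<forall>x. f x \<le> m)}"
    proof
      fix v assume vv: "v \<in> {v\<in>X. (\<Sum>j=1..K. j * v j) = m}"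
      hence v: "v \<in> X" "(\<Sum>j=1..K. j * v j) = m" by auto
      have z: "\<forall>x. x \<notin> {1..K} \<longrightarrow> v x = 0" using v by (auto simp: X_def)
      have b: "\<forall>x. v x \<le> m"
      proof
        fix x
        show "v x \<le> m"
        proof (cases "x \<in> {1..K}")
          case True
          have "v x \<le> x * v x" using True by auto
          also have "\<dots> \<le> (\<Sum>j=1..K. j * v j)" by (rule member_le_sum) (use True in auto)
          finally show ?thesis using v by simp
        next
          case False thus ?thesis using z by auto
        qed
      qed
      show "v \<in> {f. (\<forall>x. x \<notin> {1..K} \<longrightarrow> f x = 0) \<and> (\<forall>x. f x \<le> m)}" using z b by simp
    qed
  qed simp
  have "((\<lambda>m. \<Sum>v\<in>{v\<in>X. (\<Sum>j=1..K. j * v j) = m}. g v) has_sum (\<Prod>j=1..K. exp (- y j * (1 - exp (- w * real j))))) UNIV"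
    by (rule has_sum_fiber[OF tot]) (use fin in auto)
  moreover have "(\<Sum>v\<in>{v\<in>X. (\<Sum>j=1..K. j * v j) = m}. g v) =
      (\<Sum>v\<in>Omega K m. \<Prod>j=1..K. y j ^ v j / fact (v j) * exp (- y j)) * exp (- w * real m)" for m
  proof -
    have "g v = (\<Prod>j=1..K. y j ^ v j / fact (v j) * exp (- y j)) * exp (- w * real m)"
      if v: "v \<in> Omega K m" for v
    proof -
      have "g v = (\<Prod>j=1..K. (y j ^ v j / fact (v j) * exp (- y j)) * exp (- w * real (j * v j)))"
        unfolding g_def \<phi>_def
        by (rule prod.cong) (simp_all add: power_mult_distrib exp_of_nat_mult[symmetric] algebra_simps)
      also have "\<dots> = (\<Prod>j=1..K. y j ^ v j / fact (v j) * exp (- y j)) * (\<Prod>j=1..K. exp (- w * real (j * v j)))"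
        by (rule prod.distrib)
      also have "(\<Prod>j=1..K. exp (- w * real (j * v j))) = exp (\<Sum>j=1..K. - w * real (j * v j))"
        by (simp add: exp_sum)
      also have "(\<Sum>j=1..K. - w * real (j * v j)) = - w * real m"
      proof -
        have "real m = (\<Sum>j=1..K. real j * real (v j))"
          using v unfolding Omega_def by (auto simp flip: of_nat_mult of_nat_sum)
        thus ?thesis by (simp add: sum_distrib_left sum_negf)
      qed
      finally show ?thesis .
    qed
    thus ?thesis unfolding fib by (simp add: sum_distrib_right)
  qed
  ultimately show ?thesis by simp
qed


lemma PB:
  fixes lam :: "nat \<Rightarrow> nat \<Rightarrow> real" and u :: "nat \<Rightarrow> real"
  assumes s: "s \<ge> 0" and lam: "\<And>i j. i < q \<Longrightarrow> 1 \<le> j \<Longrightarrow> j \<le> k i \<Longrightarrow> lam i j \<ge> 0"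
    and u: "\<And>i. i < q \<Longrightarrow> u i \<ge> 0"
  shows "((\<lambda>n. mgcp_pmf q k lam s n * exp (- (\<Sum>i<q. u i * real (n i))))
          has_sum exp (- s * (\<Sum>i<q. \<Sum>j=1..k i. lam i j * (1 - exp (- u i * real j))))) (vecs q)"
proof -
  define h where "h = (\<lambda>i m. (\<Sum>v\<in>Omega (k i) m. \<Prod>j=1..k i. (lam i j * s) ^ v j / fact (v j) * exp (- (lam i j * s))) * exp (- u i * real m))"
  have hi: "(h i has_sum (\<Prod>j=1..k i. exp (- (lam i j * s) * (1 - exp (- u i * real j))))) UNIV" if "i \<in> {..<q}" for i
    unfolding h_def by (rule PB1) (use that s lam u in auto)
  have hnn: "h i m \<ge> 0" if "i \<in> {..<q}" for i m
    unfolding h_def using that s lam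
    by (intro mult_nonneg_nonneg sum_nonneg prod_nonneg) auto
  have "((\<lambda>g. \<Prod>i\<in>{..<q}. h i (g i)) has_sum (\<Prod>i\<in>{..<q}. \<Prod>j=1..k i. exp (- (lam i j * s) * (1 - exp (- u i * real j))))) (PiE {..<q} (\<lambda>_. UNIV))"
    by (rule has_sum_prod_PiE_nonneg) (use hi hnn in auto)
  also have "(\<Prod>i\<in>{..<q}. \<Prod>j=1..k i. exp (- (lam i j * s) * (1 - exp (- u i * real j))))
      = exp (- s * (\<Sum>i<q. \<Sum>j=1..k i. lam i j * (1 - exp (- u i * real j))))"
    by (simp add: exp_sum sum_distrib_left algebra_simps)
  finally have A: "((\<lambda>g. \<Prod>i\<in>{..<q}. h i (g i)) has_sum exp (- s * (\<Sum>i<q. \<Sum>j=1..k i. lam i j * (1 - exp (- u i * real j))))) (PiE {..<q} (\<lambda>_. UNIV))" .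
  have eq: "mgcp_pmf q k lam s (zext {..<q} g) * exp (- (\<Sum>i<q. u i * real (zext {..<q} g i))) = (\<Prod>i\<in>{..<q}. h i (g i))" for g
  proof -
    have v: "zext {..<q} g \<in> vecs q" by (auto simp: vecs_def zext_def)
    have "exp (- (\<Sum>i<q. u i * real (zext {..<q} g i))) = (\<Prod>i<q. exp (- u i * real (g i)))"
      by (simp add: exp_sum[symmetric] sum_negf[symmetric] zext_def)
    moreover have "mgcp_pmf q k lam s (zext {..<q} g) = (\<Prod>i<q. \<Sum>v\<in>Omega (k i) (g i). \<Prod>j=1..k i. (lam i j * s) ^ v j / fact (v j) * exp (- (lam i j * s)))"
      using v by (simp add: mgcp_pmf_def zext_def)
    ultimately show ?thesis by (simp add: h_def prod.distrib)
  qed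
  have vq: "vecs q = {n. \<forall>i. i \<notin> {..<q} \<longrightarrow> n i = 0}" by (auto simp: vecs_def)
  show ?thesis unfolding vq
    by (subst has_sum_zext) (use A eq in simp)
qed


lemma K_PiE:
  fixes z :: "'a \<Rightarrow> real"
  assumes P: "finite P" and z: "\<And>p. p \<in> P \<Longrightarrow> z p \<ge> 0" and zs: "sum z P < 1"
  shows "((\<lambda>f. Gamma (real (sum f P) - 1/2) * (\<Prod>p\<in>P. z p ^ f p / fact (f p)))
           has_sum (2 * sqrt pi * (1 - sqrt (1 - sum z P)))) {f\<in>PiE P (\<lambda>_. UNIV). 1 \<le> sum f P}"
proof -
  define X where "X = {f::'a\<Rightarrow>nat. f \<in> PiE P (\<lambda>_. UNIV) \<and> 1 \<le> sum f P}"
  define G where "G = (\<lambda>f::'a\<Rightarrow>nat. Gamma (real (sum f P) - 1/2) * (\<Prod>p\<in>P. z p ^ f p / fact (f p)))"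
  define h where "h = (\<lambda>f::'a\<Rightarrow>nat. sum f P)"
  have fib: "{f\<in>X. h f = N} = {f\<in>PiE P (\<lambda>_. UNIV). sum f P = N}"
    if "N \<in> {1..}" for N :: nat using that by (auto simp: X_def h_def)
  have fin: "finite {f\<in>X. h f = N}" if "N \<in> {1..}" for N :: nat
    unfolding fib[OF that] by (rule finite_Dset[OF P])
  have gs: "((\<lambda>N. Gamma (real N - 1/2) * sum z P ^ N / fact N) has_sum (2 * sqrt pi * (1 - sqrt (1 - sum z P)))) {1..}"
    by (rule gamma_series) (use z zs in \<open>auto intro: sum_nonneg\<close>)
  have eqN: "(\<Sum>f\<in>{f\<in>X. h f = N}. G f) = Gamma (real N - 1/2) * sum z P ^ N / fact N"
    if N: "N \<in> {1..}" for N :: nat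
  proof -
    have "(\<Sum>f\<in>{f\<in>X. h f = N}. G f)
        = (\<Sum>f\<in>{f\<in>PiE P (\<lambda>_. UNIV). sum f P = N}. Gamma (real N - 1/2) * (\<Prod>p\<in>P. z p ^ f p / fact (f p)))"
      unfolding fib[OF N] by (rule sum.cong) (auto simp: G_def)
    also have "\<dots> = Gamma (real N - 1/2) * (sum z P ^ N / fact N)"
      by (simp add: sum_distrib_left[symmetric] multinomial_exp[OF P])
    finally show ?thesis by simp
  qed
  have hs1: "((\<lambda>N. \<Sum>f\<in>{f\<in>X. h f = N}. G f) has_sum (2 * sqrt pi * (1 - sqrt (1 - sum z P)))) {1..}"
    using gs by (rule has_sum_cong[THEN iffD1, rotated]) (use eqN in auto)
  have hX: "h f \<in> {1..}" if "f \<in> X" for f using that by (auto simp: X_def h_def)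
  have nn: "G f \<ge> 0" if "f \<in> X" for f
  proof -
    have "sum f P \<ge> 1" using that by (auto simp: X_def)
    hence "real (sum f P) \<ge> 1" by linarith
    hence "real (sum f P) - 1/2 > 0" by linarith
    hence "Gamma (real (sum f P) - 1/2) > 0" by (rule Gamma_real_pos)
    thus ?thesis using z unfolding G_def by (intro mult_nonneg_nonneg prod_nonneg divide_nonneg_nonneg) auto
  qed
  have "(G has_sum (2 * sqrt pi * (1 - sqrt (1 - sum z P)))) X"
    by (rule has_sum_fiber_rev[OF hs1 hX fin nn])
  thus ?thesis by (simp add: G_def X_def)
qed

definition PP :: "nat \<Rightarrow> (nat \<Rightarrow> nat) \<Rightarrow> (nat \<times> nat) set" where
  "PP q k = Sigma {..<q} (\<lambda>i. {1..k i})"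

definition FF :: "nat \<Rightarrow> (nat \<Rightarrow> nat) \<Rightarrow> (nat \<Rightarrow> nat \<Rightarrow> nat) set" where
  "FF q k = {nn. \<forall>i j. (i, j) \<notin> PP q k \<longrightarrow> nn i j = 0}"

definition tot :: "nat \<Rightarrow> (nat \<Rightarrow> nat) \<Rightarrow> (nat \<Rightarrow> nat \<Rightarrow> nat) \<Rightarrow> nat" where
  "tot q k nn = (\<Sum>i<q. \<Sum>j=1..k i. nn i j)"

definition WW :: "nat \<Rightarrow> (nat \<Rightarrow> nat) \<Rightarrow> (nat \<Rightarrow> nat \<Rightarrow> real) \<Rightarrow> (nat \<Rightarrow> nat \<Rightarrow> nat) \<Rightarrow> real" where
  "WW q k z nn = Gamma (real (tot q k nn) - 1/2) * (\<Prod>i<q. \<Prod>j=1..k i. z i j ^ nn i j / fact (nn i j))"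

lemma finite_PP: "finite (PP q k)" by (simp add: PP_def)

lemma sum_PP: "(\<Sum>i<q. \<Sum>j=1..k i. g i j) = (\<Sum>p\<in>PP q k. case_prod g p)"
  unfolding PP_def by (subst sum.Sigma) auto

lemma prod_PP: "(\<Prod>i<q. \<Prod>j=1..k i. g i j) = (\<Prod>p\<in>PP q k. case_prod g p)"
  unfolding PP_def by (subst prod.Sigma) auto

lemma KF:
  fixes z :: "nat \<Rightarrow> nat \<Rightarrow> real"
  assumes z: "\<And>i j. (i,j) \<in> PP q k \<Longrightarrow> z i j \<ge> 0" and zs: "(\<Sum>i<q. \<Sum>j=1..k i. z i j) < 1"
  shows "(WW q k z has_sum (2 * sqrt pi * (1 - sqrt (1 - (\<Sum>i<q. \<Sum>j=1..k i. z i j))))) {nn\<in>FF q k. 1 \<le> tot q k nn}"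
proof -
  have zs': "sum (case_prod z) (PP q k) < 1" using zs sum_PP[where g=z and q=q and k=k] by linarith
  have K: "((\<lambda>f. Gamma (real (sum f (PP q k)) - 1/2) * (\<Prod>p\<in>PP q k. case_prod z p ^ f p / fact (f p)))
           has_sum (2 * sqrt pi * (1 - sqrt (1 - sum (case_prod z) (PP q k))))) {f\<in>PiE (PP q k) (\<lambda>_. UNIV). 1 \<le> sum f (PP q k)}"
    by (rule K_PiE[OF finite_PP]) (use z zs' in auto)
  define ext where "ext = (\<lambda>f::nat\<times>nat\<Rightarrow>nat. \<lambda>a b. if (a, b) \<in> PP q k then f (a, b) else 0)"
  have tot_eq: "tot q k nn = sum (case_prod nn) (PP q k)" for nn
    unfolding tot_def by (rule sum_PP)
  have ext_sum: "sum (case_prod (ext f)) (PP q k) = sum f (PP q k)" for f :: "nat \<times> nat \<Rightarrow> nat"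
    by (rule sum.cong) (auto simp: ext_def)
  have ext_prod: "(\<Prod>p\<in>PP q k. case_prod z p ^ case_prod (ext f) p / fact (case_prod (ext f) p))
      = (\<Prod>p\<in>PP q k. case_prod z p ^ f p / fact (f p))" for f :: "nat \<times> nat \<Rightarrow> nat"
    by (rule prod.cong) (auto simp: ext_def)
  have "((\<lambda>f. Gamma (real (sum f (PP q k)) - 1/2) * (\<Prod>p\<in>PP q k. case_prod z p ^ f p / fact (f p)))
           has_sum (2 * sqrt pi * (1 - sqrt (1 - sum (case_prod z) (PP q k))))) {f\<in>PiE (PP q k) (\<lambda>_. UNIV). 1 \<le> sum f (PP q k)}
       = (WW q k z has_sum (2 * sqrt pi * (1 - sqrt (1 - sum (case_prod z) (PP q k))))) {nn\<in>FF q k. 1 \<le> tot q k nn}"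
  proof (rule has_sum_reindex_bij_witness[where j=ext and i="\<lambda>nn. restrict (case_prod nn) (PP q k)"])
    fix f :: "nat \<times> nat \<Rightarrow> nat" assume f: "f \<in> {f\<in>PiE (PP q k) (\<lambda>_. UNIV). 1 \<le> sum f (PP q k)}"
    show "restrict (case_prod (ext f)) (PP q k) = f"
      using f by (auto simp: ext_def fun_eq_iff PiE_iff extensional_def)
    show "ext f \<in> {nn\<in>FF q k. 1 \<le> tot q k nn}"
      using f by (auto simp: ext_def FF_def tot_eq ext_sum)
    show "WW q k z (ext f) = Gamma (real (sum f (PP q k)) - 1/2) * (\<Prod>p\<in>PP q k. case_prod z p ^ f p / fact (f p))"
    proof -
      have "WW q k z (ext f) = Gamma (real (sum (case_prod (ext f)) (PP q k)) - 1/2) *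
          (\<Prod>p\<in>PP q k. case_prod z p ^ case_prod (ext f) p / fact (case_prod (ext f) p))"
        unfolding WW_def tot_eq by (simp only: prod_PP split_def)
      thus ?thesis by (simp only: ext_sum ext_prod)
    qed
  next
    fix nn assume nn: "nn \<in> {nn\<in>FF q k. 1 \<le> tot q k nn}"
    show "ext (restrict (case_prod nn) (PP q k)) = nn"
      using nn by (auto simp: ext_def FF_def fun_eq_iff)
    show "restrict (case_prod nn) (PP q k) \<in> {f\<in>PiE (PP q k) (\<lambda>_. UNIV). 1 \<le> sum f (PP q k)}"
      using nn by (auto simp: tot_eq)
  qed simp
  with K show ?thesis unfolding sum_PP[where g=z and q=q and k=k] by simp
qed


definition vecof :: "(nat \<Rightarrow> nat) \<Rightarrow> (nat \<Rightarrow> nat \<Rightarrow> nat) \<Rightarrow> nat \<Rightarrow> nat" where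
  "vecof k nn = (\<lambda>i. \<Sum>j=1..k i. j * nn i j)"

lemma FF_zero_out: "nn \<in> FF q k \<Longrightarrow> i \<ge> q \<Longrightarrow> nn i j = 0"
  by (auto simp: FF_def PP_def)

lemma FF_zero_j: "nn \<in> FF q k \<Longrightarrow> j \<notin> {1..k i} \<Longrightarrow> nn i j = 0"
  by (auto simp: FF_def PP_def)

lemma tot_zero_vec:
  assumes "nn \<in> FF q k" "tot q k nn = 0"
  shows "vecof k nn = (\<lambda>_. 0)"
proof
  fix i
  show "vecof k nn i = 0"
  proof (cases "i < q")
    case True
    hence "\<forall>j\<in>{1..k i}. nn i j = 0" using assms(2) unfolding tot_def by simp
    thus ?thesis by (simp add: vecof_def)
  next
    case False thus ?thesis using FF_zero_out[OF assms(1)] by (simp add: vecof_def)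
  qed
qed

lemma vec_zero_tot:
  assumes "nn \<in> FF q k" "vecof k nn = (\<lambda>_. 0)"
  shows "tot q k nn = 0"
proof -
  have "nn i j = 0" if "i < q" "j \<in> {1..k i}" for i j
  proof -
    have "(\<Sum>j=1..k i. j * nn i j) = 0" using assms(2) by (metis vecof_def)
    hence "j * nn i j = 0" using that by simp
    thus ?thesis using that by simp
  qed
  thus ?thesis by (simp add: tot_def)
qed

lemma vec_in_posvecs:
  assumes "nn \<in> FF q k" "1 \<le> tot q k nn"
  shows "vecof k nn \<in> posvecs q"
proof -
  have "vecof k nn \<in> vecs q" using FF_zero_out[OF assms(1)] by (simp add: vecs_def vecof_def)
  moreover have "vecof k nn \<noteq> (\<lambda>_. 0)" using vec_zero_tot[OF assms(1)] assms(2) by auto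
  ultimately show ?thesis by (simp add: posvecs_def)
qed

lemma Omega_fam_fiber:
  assumes n: "n \<in> posvecs q"
  shows "{nn\<in>{nn\<in>FF q k. 1 \<le> tot q k nn}. vecof k nn = n} = Omega_fam q k n"
proof (intro equalityI subsetI)
  fix nn assume nn: "nn \<in> {nn\<in>{nn\<in>FF q k. 1 \<le> tot q k nn}. vecof k nn = n}"
  hence F: "nn \<in> FF q k" and v: "vecof k nn = n" by auto
  have "nn i \<in> Omega (k i) (n i)" if "i < q" for i
  proof -
    have z: "nn i j = 0" if "j < 1 \<or> k i < j" for j using FF_zero_j[OF F, where j=j and i=i] that by auto
    have s: "(\<Sum>j=1..k i. j * nn i j) = n i" using fun_cong[OF v, of i] by (simp add: vecof_def)
    show ?thesis unfolding Omega_def mem_Collect_eq using z s by (intro conjI allI impI) auto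
  qed
  moreover have "nn i = (\<lambda>_. 0)" if "i \<ge> q" for i
    using FF_zero_out[OF F that] by auto
  ultimately show "nn \<in> Omega_fam q k n" by (simp add: Omega_fam_def)
next
  fix nn assume nn: "nn \<in> Omega_fam q k n"
  have om: "nn i \<in> Omega (k i) (n i)" if "i < q" for i
    using nn that by (simp add: Omega_fam_def)
  have zq: "nn i j = 0" if "q \<le> i" for i j
  proof -
    have "nn i = (\<lambda>_. 0)" using nn that by (simp add: Omega_fam_def)
    thus ?thesis by simp
  qed
  have omz: "nn i j = 0" if "i < q" "j < 1 \<or> k i < j" for i j
  proof -
    have "\<forall>j. (j < 1 \<or> k i < j) \<longrightarrow> nn i j = 0"
      using om[OF that(1)] unfolding Omega_def mem_Collect_eq by (rule conjunct1)
    hence "(j < 1 \<or> k i < j) \<longrightarrow> nn i j = 0" by (rule spec)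
    thus ?thesis using that(2) by (rule mp)
  qed
  have oms: "(\<Sum>j=1..k i. j * nn i j) = n i" if "i < q" for i
    using om[OF that] unfolding Omega_def mem_Collect_eq by (rule conjunct2)
  have F: "nn \<in> FF q k"
    unfolding FF_def PP_def mem_Collect_eq
  proof (intro allI impI)
    fix i j assume ij: "(i, j) \<notin> Sigma {..<q} (\<lambda>i. {1..k i})"
    show "nn i j = 0"
    proof (cases "i < q")
      case True
      hence "\<not> (1 \<le> j \<and> j \<le> k i)" using ij by simp
      hence "j < 1 \<or> k i < j" by linarith
      thus ?thesis by (rule omz[OF True])
    next
      case False thus ?thesis using zq by simp
    qed
  qed
  have v: "vecof k nn = n"
  proof
    fix i
    show "vecof k nn i = n i"
    proof (cases "i < q")
      case True
      thus ?thesis using oms[OF True] by (simp add: vecof_def)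
    next
      case False
      hence "vecof k nn i = 0" using zq by (simp add: vecof_def)
      moreover have "n i = 0" using n False by (simp add: posvecs_def vecs_def)
      ultimately show ?thesis by simp
    qed
  qed
  have "tot q k nn \<noteq> 0"
  proof
    assume "tot q k nn = 0"
    hence "vecof k nn = (\<lambda>_. 0)" by (rule tot_zero_vec[OF F])
    thus False using v n by (simp add: posvecs_def)
  qed
  hence "1 \<le> tot q k nn" by simp
  thus "nn \<in> {nn\<in>{nn\<in>FF q k. 1 \<le> tot q k nn}. vecof k nn = n}" using F v by simp
qed

lemma finite_Omega_fam:
  assumes n: "n \<in> posvecs q"
  shows "finite (Omega_fam q k n)"
proof -
  define M where "M = (\<Sum>i<q. n i)"
  have "Omega_fam q k n \<subseteq> (\<lambda>f. \<lambda>i j. f (i, j)) ` {f::nat\<times>nat\<Rightarrow>nat. (\<forall>x. x \<notin> PP q k \<longrightarrow> f x = 0) \<and> (\<forall>x. f x \<le> M)}"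
  proof
    fix nn assume nn: "nn \<in> Omega_fam q k n"
    hence F: "nn \<in> FF q k" and v: "vecof k nn = n"
      using Omega_fam_fiber[OF n, of k] by auto
    have b: "nn i j \<le> M" for i j
    proof (cases "(i, j) \<in> PP q k")
      case True
      hence ij: "i < q" "j \<in> {1..k i}" by (auto simp: PP_def)
      have "nn i j \<le> j * nn i j" using ij by auto
      also have "\<dots> \<le> (\<Sum>j=1..k i. j * nn i j)" by (rule member_le_sum) (use ij in auto)
      also have "\<dots> = n i" using v by (metis vecof_def)
      also have "\<dots> \<le> M" unfolding M_def by (rule member_le_sum) (use ij in auto)
      finally show ?thesis .
    next
      case False thus ?thesis using F by (auto simp: FF_def)
    qed
    have "case_prod nn \<in> {f::nat\<times>nat\<Rightarrow>nat. (\<forall>x. x \<notin> PP q k \<longrightarrow> f x = 0) \<and> (\<forall>x. f x \<le> M)}"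
      using F b by (auto simp: FF_def)
    moreover have "nn = (\<lambda>i j. (case_prod nn) (i, j))" by simp
    ultimately show "nn \<in> (\<lambda>f. \<lambda>i j. f (i, j)) ` {f::nat\<times>nat\<Rightarrow>nat. (\<forall>x. x \<notin> PP q k \<longrightarrow> f x = 0) \<and> (\<forall>x. f x \<le> M)}"
      by blast
  qed
  moreover have "finite {f::nat\<times>nat\<Rightarrow>nat. (\<forall>x. x \<notin> PP q k \<longrightarrow> f x = 0) \<and> (\<forall>x. f x \<le> M)}"
    by (rule finite_bounded_support[OF finite_PP])
  ultimately show ?thesis using finite_subset by blast
qed

lemma FA:
  fixes z :: "nat \<Rightarrow> nat \<Rightarrow> real"
  assumes z: "\<And>i j. (i,j) \<in> PP q k \<Longrightarrow> z i j \<ge> 0" and zs: "(\<Sum>i<q. \<Sum>j=1..k i. z i j) < 1"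
  shows "((\<lambda>n. \<Sum>nn\<in>Omega_fam q k n. WW q k z nn) has_sum (2 * sqrt pi * (1 - sqrt (1 - (\<Sum>i<q. \<Sum>j=1..k i. z i j))))) (posvecs q)"
proof -
  have fin: "finite {nn\<in>{nn\<in>FF q k. 1 \<le> tot q k nn}. vecof k nn = n}" if "n \<in> posvecs q" for n
    by (subst Omega_fam_fiber[OF that]) (rule finite_Omega_fam[OF that])
  have inA: "vecof k nn \<in> posvecs q" if "nn \<in> {nn\<in>FF q k. 1 \<le> tot q k nn}" for nn
    using that by (auto intro: vec_in_posvecs)
  have "((\<lambda>n. \<Sum>nn\<in>{nn\<in>{nn\<in>FF q k. 1 \<le> tot q k nn}. vecof k nn = n}. WW q k z nn) has_sum (2 * sqrt pi * (1 - sqrt (1 - (\<Sum>i<q. \<Sum>j=1..k i. z i j))))) (posvecs q)"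
    by (rule has_sum_fiber[OF KF[OF z zs] inA fin])
  thus ?thesis
  proof (rule has_sum_cong[THEN iffD1, rotated])
    fix n assume n: "n \<in> posvecs q"
    show "(\<Sum>nn\<in>{nn\<in>{nn\<in>FF q k. 1 \<le> tot q k nn}. vecof k nn = n}. WW q k z nn) = (\<Sum>nn\<in>Omega_fam q k n. WW q k z nn)"
      by (simp only: Omega_fam_fiber[OF n])
  qed
qed


lemma prod_ind:
  fixes a b :: "nat \<Rightarrow> nat \<Rightarrow> real"
  assumes k: "\<And>i. i < q \<Longrightarrow> k i \<ge> 1"
  shows "(\<Prod>i<q. \<Prod>j=1..k i. a i j * of_bool (B i) / b i j) = of_bool (\<forall>i<q. B i) * (\<Prod>i<q. \<Prod>j=1..k i. a i j / b i j)"
proof (cases "\<forall>i<q. B i")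
  case True
  thus ?thesis by simp
next
  case False
  then obtain i0 where i0: "i0 < q" "\<not> B i0" by auto
  have h0: "(\<Prod>j=1..k i0. a i0 j * of_bool (B i0) / b i0 j) = 0"
  proof (rule prod_zero)
    show "\<exists>j\<in>{1..k i0}. a i0 j * of_bool (B i0) / b i0 j = 0"
      using i0 k[OF i0(1)] by (intro bexI[of _ 1]) auto
  qed simp
  have "(\<Prod>i<q. \<Prod>j=1..k i. a i j * of_bool (B i) / b i j) = 0"
  proof (rule prod_zero)
    show "\<exists>i\<in>{..<q}. (\<Prod>j=1..k i. a i j * of_bool (B i) / b i j) = 0"
      using i0 h0 by (intro bexI[of _ i0]) auto
  qed simp
  thus ?thesis using False by simp
qed

lemma levyX_eq:
  assumes k: "\<And>i. i < q \<Longrightarrow> k i \<ge> 1"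
  shows "levyX q k lam \<delta> \<gamma> A =
    \<delta> * sqrt (2 * lam_total q k lam + \<gamma>\<^sup>2) / (2 * sqrt pi) *
    (\<Sum>\<^sub>\<infinity>n\<in>posvecs q. of_bool (\<forall>i<q. n i \<in> A i) *
        (\<Sum>nn\<in>Omega_fam q k n. WW q k (\<lambda>i j. 2 * lam i j / (2 * lam_total q k lam + \<gamma>\<^sup>2)) nn))"
  unfolding levyX_def
proof (intro arg_cong[where f="\<lambda>x. _ * x"] infsum_cong)
  fix n
  show "(\<Sum>nn\<in>Omega_fam q k n.
        Gamma (real (\<Sum>i<q. \<Sum>j=1..k i. nn i j) - 1/2) *
        (\<Prod>i<q. \<Prod>j=1..k i.
           (2 * lam i j / (2 * lam_total q k lam + \<gamma>\<^sup>2)) ^ (nn i j) *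
           of_bool (n i \<in> A i) / fact (nn i j))) =
     of_bool (\<forall>i<q. n i \<in> A i) *
        (\<Sum>nn\<in>Omega_fam q k n. WW q k (\<lambda>i j. 2 * lam i j / (2 * lam_total q k lam + \<gamma>\<^sup>2)) nn)"
    unfolding sum_distrib_left
    by (rule sum.cong[OF refl]) (unfold WW_def tot_def, subst prod_ind[OF k], simp_all add: mult.left_commute)
qed

lemma E_WW:
  assumes n: "n \<in> posvecs q" and nn: "nn \<in> Omega_fam q k n"
  shows "exp (- (\<Sum>i<q. u i * real (n i))) * WW q k z nn = WW q k (\<lambda>i j. z i j * exp (- u i * real j)) nn"
proof -
  have F: "nn \<in> FF q k" and v: "vecof k nn = n"
    using nn Omega_fam_fiber[OF n, of k] by auto
  have ei: "(\<Prod>j=1..k i. exp (- u i * real j) ^ nn i j) = exp (- u i * real (n i))" for i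
  proof -
    have "(\<Prod>j=1..k i. exp (- u i * real j) ^ nn i j) = (\<Prod>j=1..k i. exp (real (nn i j) * (- u i * real j)))"
      by (rule prod.cong[OF refl]) (simp add: exp_of_nat_mult[symmetric] algebra_simps)
    also have "\<dots> = exp (\<Sum>j=1..k i. real (nn i j) * (- u i * real j))"
      by (simp add: exp_sum)
    also have "(\<Sum>j=1..k i. real (nn i j) * (- u i * real j)) = - u i * real (\<Sum>j=1..k i. j * nn i j)"
      by (simp add: sum_distrib_left of_nat_sum algebra_simps)
    also have "(\<Sum>j=1..k i. j * nn i j) = n i" using fun_cong[OF v, of i] by (simp add: vecof_def)
    finally show ?thesis .
  qed
  have "(\<Prod>i<q. \<Prod>j=1..k i. exp (- u i * real j) ^ nn i j) = (\<Prod>i<q. exp (- u i * real (n i)))"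
    by (rule prod.cong[OF refl ei])
  also have "\<dots> = exp (\<Sum>i<q. - u i * real (n i))" by (simp add: exp_sum)
  also have "(\<Sum>i<q. - u i * real (n i)) = - (\<Sum>i<q. u i * real (n i))" by (simp add: sum_negf[symmetric])
  finally have "exp (- (\<Sum>i<q. u i * real (n i))) = (\<Prod>i<q. \<Prod>j=1..k i. exp (- u i * real j) ^ nn i j)" by simp
  moreover have "(\<Prod>i<q. \<Prod>j=1..k i. (z i j * exp (- u i * real j)) ^ nn i j / fact (nn i j))
      = (\<Prod>i<q. \<Prod>j=1..k i. exp (- u i * real j) ^ nn i j) * (\<Prod>i<q. \<Prod>j=1..k i. z i j ^ nn i j / fact (nn i j))"
    by (simp add: prod.distrib[symmetric] power_mult_distrib mult_ac)
  ultimately show ?thesis by (simp add: WW_def)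
qed


lemma countable_vecs: "countable (vecs q)"
proof (rule countable_image_inj_on)
  show "countable ((\<lambda>n. map n [0..<q]) ` vecs q)" by (rule countable_subset[of _ UNIV]) auto
  show "inj_on (\<lambda>n. map n [0..<q]) (vecs q)"
  proof (rule inj_onI)
    fix n m assume nm: "n \<in> vecs q" "m \<in> vecs q" "map n [0..<q] = map m [0..<q]"
    show "n = m"
    proof
      fix i show "n i = m i"
      proof (cases "i < q")
        case True thus ?thesis using nm(3) by (simp add: map_eq_conv)
      next
        case False thus ?thesis using nm(1,2) by (simp add: vecs_def)
      qed
    qed
  qed
qed

lemma mgcp_nonneg:
  assumes "s \<ge> 0" "\<And>i j. i < q \<Longrightarrow> 1 \<le> j \<Longrightarrow> j \<le> k i \<Longrightarrow> lam i j \<ge> 0"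
  shows "mgcp_pmf q k lam s n \<ge> 0"
  unfolding mgcp_pmf_def using assms
  by (auto intro!: prod_nonneg sum_nonneg mult_nonneg_nonneg divide_nonneg_nonneg)

lemma mgcp_cont: "continuous_on UNIV (\<lambda>s. mgcp_pmf q k lam s n)"
  unfolding mgcp_pmf_def by (cases "n \<in> vecs q") (auto intro!: continuous_intros)

theorem mainTheorem18:
  fixes q :: nat and k :: "nat \<Rightarrow> nat" and lam :: "nat \<Rightarrow> nat \<Rightarrow> real"
    and \<delta> \<gamma> :: real and \<mu> :: "real \<Rightarrow> real measure"
  assumes "q \<ge> 1"
    and "\<And>i. i < q \<Longrightarrow> k i \<ge> 1"
    and "\<And>i j. i < q \<Longrightarrow> 1 \<le> j \<Longrightarrow> j \<le> k i \<Longrightarrow> lam i j > 0"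
    and "\<delta> > 0" and "\<gamma> > 0"
    and "\<And>t. t \<ge> 0 \<Longrightarrow> prob_space (\<mu> t)"
    and "\<And>t. t \<ge> 0 \<Longrightarrow> sets (\<mu> t) = sets borel"
    and "\<And>t. t \<ge> 0 \<Longrightarrow> AE x in \<mu> t. 0 \<le> x"
    and "\<And>t s. t \<ge> 0 \<Longrightarrow> s \<ge> 0 \<Longrightarrow>
           (\<integral>x. exp (- s * x) \<partial>(\<mu> t)) = exp (- \<delta> * t * (sqrt (2 * s + \<gamma>\<^sup>2) - \<gamma>))"
  shows "is_levy_measure_Nq q (sub_pmf q k lam \<mu>) (levyX q k lam \<delta> \<gamma>)"
proof -
  note k = assms(2)
  have lamnn: "\<And>i j. i < q \<Longrightarrow> 1 \<le> j \<Longrightarrow> j \<le> k i \<Longrightarrow> lam i j \<ge> 0"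
    using assms(3) by (simp add: less_imp_le)
  define \<Lambda> where "\<Lambda> = lam_total q k lam"
  define D where "D = 2 * \<Lambda> + \<gamma>\<^sup>2"
  define x where "x = (\<lambda>i j. 2 * lam i j / D)"
  define C where "C = \<delta> * sqrt D / (2 * sqrt pi)"
  define cW where "cW = (\<lambda>n. \<Sum>nn\<in>Omega_fam q k n. WW q k x nn)"
  have \<Lambda>nn: "\<Lambda> \<ge> 0" unfolding \<Lambda>_def lam_total_def
    by (intro sum_nonneg) (auto intro: lamnn)
  have Dpos: "D > 0" unfolding D_def using \<Lambda>nn assms(5) by (simp add: add_nonneg_pos)
  have Cnn: "C \<ge> 0" unfolding C_def using assms(4) Dpos by simp
  have xnn: "x i j \<ge> 0" if "(i, j) \<in> PP q k" for i j
    using that Dpos lamnn unfolding x_def PP_def by auto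
  have sx: "(\<Sum>i<q. \<Sum>j=1..k i. x i j) = 2 * \<Lambda> / D"
    unfolding x_def \<Lambda>_def lam_total_def by (simp add: sum_divide_distrib sum_distrib_left)
  have sx1: "2 * \<Lambda> / D < 1" using Dpos assms(5) by (simp add: D_def)
  define T0 where "T0 = 2 * sqrt pi * (1 - sqrt (1 - 2 * \<Lambda> / D))"
  have hsW: "(cW has_sum T0) (posvecs q)"
    unfolding cW_def T0_def sx[symmetric] by (rule FA) (use xnn sx sx1 in auto)
  have WWnn: "WW q k z nn \<ge> 0" if "nn \<in> FF q k" "1 \<le> tot q k nn" "\<And>i j. (i, j) \<in> PP q k \<Longrightarrow> z i j \<ge> 0" for z nn
  proof -
    have "real (tot q k nn) \<ge> 1" using that(2) by linarith
    hence "Gamma (real (tot q k nn) - 1/2) > 0" by (intro Gamma_real_pos) linarith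
    moreover have "(\<Prod>i<q. \<Prod>j=1..k i. z i j ^ nn i j / fact (nn i j)) \<ge> 0"
      using that(3) by (intro prod_nonneg) (auto simp: PP_def)
    ultimately show ?thesis unfolding WW_def by simp
  qed
  have cWnn: "cW n \<ge> 0" if "n \<in> posvecs q" for n
    unfolding cW_def
  proof (rule sum_nonneg)
    fix nn assume "nn \<in> Omega_fam q k n"
    hence "nn \<in> FF q k" "1 \<le> tot q k nn" using Omega_fam_fiber[OF that, of k] by auto
    thus "WW q k x nn \<ge> 0" using xnn by (intro WWnn) auto
  qed
  have lev: "levyX q k lam \<delta> \<gamma> A = C * (\<Sum>\<^sub>\<infinity>n\<in>posvecs q. of_bool (\<forall>i<q. n i \<in> A i) * cW n)" for A
    unfolding C_def D_def \<Lambda>_def cW_def x_def by (rule levyX_eq[OF k])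
  have single: "levyX q k lam \<delta> \<gamma> (\<lambda>i. {n i}) = C * cW n" if n: "n \<in> posvecs q" for n
  proof -
    have "(\<Sum>\<^sub>\<infinity>m\<in>posvecs q. of_bool (\<forall>i<q. m i \<in> {n i}) * cW m) = (\<Sum>\<^sub>\<infinity>m\<in>{n}. cW m)"
    proof (rule infsum_cong_neutral)
      fix m assume m: "m \<in> posvecs q - {n}"
      have "\<not> (\<forall>i<q. m i = n i)"
      proof
        assume h: "\<forall>i<q. m i = n i"
        have "m = n"
        proof
          fix i show "m i = n i"
            using h m n by (cases "i < q") (auto simp: posvecs_def vecs_def)
        qed
        thus False using m by simp
      qed
      thus "of_bool (\<forall>i<q. m i \<in> {n i}) * cW m = 0" by simp
    qed (use n in auto)
    thus ?thesis unfolding lev by simp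
  qed
  show ?thesis
    unfolding is_levy_measure_Nq_def
  proof (intro conjI allI ballI impI)
    fix A :: "nat \<Rightarrow> nat set"
    define B where "B = {n\<in>posvecs q. \<forall>i<q. n i \<in> A i}"
    have sB: "cW summable_on B"
      by (rule summable_on_subset_banach[of _ "posvecs q"]) (use hsW in \<open>auto simp: B_def summable_on_def\<close>)
    have "(\<Sum>\<^sub>\<infinity>n\<in>posvecs q. of_bool (\<forall>i<q. n i \<in> A i) * cW n) = (\<Sum>\<^sub>\<infinity>n\<in>B. cW n)"
      by (rule infsum_cong_neutral) (auto simp: B_def)
    hence levA: "levyX q k lam \<delta> \<gamma> A = C * (\<Sum>\<^sub>\<infinity>n\<in>B. cW n)" by (simp add: lev)
    have "((\<lambda>n. C * cW n) has_sum (C * (\<Sum>\<^sub>\<infinity>n\<in>B. cW n))) B"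
      by (rule has_sum_cmult_right) (use sB in simp)
    thus "((\<lambda>n. levyX q k lam \<delta> \<gamma> (\<lambda>i. {n i})) has_sum levyX q k lam \<delta> \<gamma> A) {n \<in> posvecs q. \<forall>i<q. n i \<in> A i}"
      unfolding levA B_def[symmetric]
      by (rule has_sum_cong[THEN iffD1, rotated]) (simp add: single B_def)
  next
    fix n assume "n \<in> posvecs q"
    thus "levyX q k lam \<delta> \<gamma> (\<lambda>i. {n i}) \<ge> 0" using single cWnn Cnn by simp
  next
    fix t :: real and u :: "nat \<Rightarrow> real"
    assume t: "t \<ge> 0" and u: "\<forall>i<q. 0 \<le> u i"
    define \<psi> where "\<psi> = (\<Sum>i<q. \<Sum>j=1..k i. lam i j * (1 - exp (- u i * real j)))"
    define S where "S = \<delta> * (sqrt (2 * \<psi> + \<gamma>\<^sup>2) - \<gamma>)"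
    define E where "E = (\<lambda>n::nat\<Rightarrow>nat. exp (- (\<Sum>i<q. u i * real (n i))))"
    define xu where "xu = (\<lambda>i j. x i j * exp (- u i * real j))"
    have e1: "exp (- u i * real j) \<le> 1" if "i < q" for i j using u that by simp
    have \<psi>nn: "\<psi> \<ge> 0" unfolding \<psi>_def
      by (intro sum_nonneg mult_nonneg_nonneg) (use lamnn e1 in auto)
    have xunn: "xu i j \<ge> 0" if "(i, j) \<in> PP q k" for i j
      using xnn[OF that] unfolding xu_def by simp
    have sxu: "(\<Sum>i<q. \<Sum>j=1..k i. xu i j) = 2 * (\<Lambda> - \<psi>) / D"
    proof -
      have "\<Lambda> - \<psi> = (\<Sum>i<q. \<Sum>j=1..k i. lam i j * exp (- u i * real j))"
        unfolding \<Lambda>_def lam_total_def \<psi>_def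
        by (simp add: sum_subtractf[symmetric] right_diff_distrib)
      thus ?thesis unfolding xu_def x_def
        by (simp add: sum_divide_distrib sum_distrib_left mult_ac)
    qed
    have sxu1: "(\<Sum>i<q. \<Sum>j=1..k i. xu i j) < 1"
    proof -
      have g2: "\<gamma>\<^sup>2 > 0" using assms(5) by simp
      show ?thesis unfolding sxu using Dpos assms(5) \<psi>nn by (simp add: D_def) (use g2 \<psi>nn in linarith)
    qed
    define Tu where "Tu = 2 * sqrt pi * (1 - sqrt (1 - 2 * (\<Lambda> - \<psi>) / D))"
    have hsWu: "((\<lambda>n. \<Sum>nn\<in>Omega_fam q k n. WW q k xu nn) has_sum Tu) (posvecs q)"
      unfolding Tu_def sxu[symmetric] by (rule FA) (use xunn sxu1 in auto)
    have Eeq: "(\<Sum>nn\<in>Omega_fam q k n. WW q k xu nn) = E n * cW n" if n: "n \<in> posvecs q" for n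
      unfolding cW_def sum_distrib_left E_def xu_def
      by (rule sum.cong[OF refl]) (simp add: E_WW[OF n])
    have "((\<lambda>n. C * cW n + - (C * (\<Sum>nn\<in>Omega_fam q k n. WW q k xu nn))) has_sum (C * T0 + - (C * Tu))) (posvecs q)"
      by (intro has_sum_add has_sum_cmult_right has_sum_uminusI hsW hsWu)
    moreover have "C * T0 + - (C * Tu) = S"
    proof -
      have sq: "sqrt D > 0" using Dpos by simp
      have "1 - 2 * \<Lambda> / D = \<gamma>\<^sup>2 / D" using Dpos by (simp add: D_def field_simps)
      hence s1: "sqrt (1 - 2 * \<Lambda> / D) = \<gamma> / sqrt D" using assms(5) by (simp add: real_sqrt_divide)
      have "1 - 2 * (\<Lambda> - \<psi>) / D = (2 * \<psi> + \<gamma>\<^sup>2) / D" using Dpos by (simp add: D_def field_simps)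
      hence s2: "sqrt (1 - 2 * (\<Lambda> - \<psi>) / D) = sqrt (2 * \<psi> + \<gamma>\<^sup>2) / sqrt D" by (simp add: real_sqrt_divide)
      have "C * T0 + - (C * Tu) = C * (2 * sqrt pi) * (sqrt (1 - 2 * (\<Lambda> - \<psi>) / D) - sqrt (1 - 2 * \<Lambda> / D))"
        unfolding T0_def Tu_def by (simp add: algebra_simps)
      also have "C * (2 * sqrt pi) = \<delta> * sqrt D" unfolding C_def by simp
      also have "\<delta> * sqrt D * (sqrt (1 - 2 * (\<Lambda> - \<psi>) / D) - sqrt (1 - 2 * \<Lambda> / D)) = S"
        unfolding s1 s2 S_def using sq by (simp add: field_simps)
      finally show ?thesis .
    qed
    ultimately have h3a: "((\<lambda>n. C * cW n + - (C * (\<Sum>nn\<in>Omega_fam q k n. WW q k xu nn))) has_sum S) (posvecs q)" by simp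
    have h3a': "((\<lambda>n. (1 - exp (- (\<Sum>i<q. u i * real (n i)))) * levyX q k lam \<delta> \<gamma> (\<lambda>i. {n i})) has_sum S) (posvecs q)"
      using h3a
    proof (rule has_sum_cong[THEN iffD1, rotated])
      fix n assume n: "n \<in> posvecs q"
      show "C * cW n + - (C * (\<Sum>nn\<in>Omega_fam q k n. WW q k xu nn)) = (1 - exp (- (\<Sum>i<q. u i * real (n i)))) * levyX q k lam \<delta> \<gamma> (\<lambda>i. {n i})"
        unfolding single[OF n] Eeq[OF n] E_def by (simp add: algebra_simps)
    qed
    define M where "M = \<mu> t"
    have ps: "prob_space M" unfolding M_def using assms(6) t by simp
    have fm: "finite_measure M" using ps by (simp add: prob_space_def)
    have sM: "sets M = sets borel" unfolding M_def using assms(7) t by simp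
    have aeM: "AE s in M. 0 \<le> s" unfolding M_def using assms(8) t by simp
    have mb: "borel_measurable M = borel_measurable borel" by (rule measurable_cong_sets[OF sM refl])
    define f where "f = (\<lambda>n s. mgcp_pmf q k lam s n * E n)"
    define G where "G = (\<lambda>s::real. exp (- s * \<psi>))"
    have fmeas: "f n \<in> borel_measurable M" for n
      unfolding mb f_def by (intro borel_measurable_continuous_onI continuous_intros mgcp_cont)
    have Gmeas: "G \<in> borel_measurable M"
      unfolding mb G_def by (intro borel_measurable_continuous_onI continuous_intros)
    have ae: "AE s in M. (\<forall>n\<in>vecs q. f n s \<ge> 0) \<and> ((\<lambda>n. f n s) has_sum G s) (vecs q)"
      using aeM
    proof eventually_elim
      case (elim s)
      have "((\<lambda>n. f n s) has_sum G s) (vecs q)"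
        unfolding f_def G_def E_def \<psi>_def by (rule PB) (use elim lamnn u in auto)
      moreover have "\<forall>n\<in>vecs q. f n s \<ge> 0"
        unfolding f_def E_def using mgcp_nonneg[OF elim lamnn] by simp
      ultimately show ?case by simp
    qed
    have Gi: "integrable M G"
    proof (rule finite_measure.integrable_const_bound[OF fm, where B=1])
      show "AE s in M. norm (G s) \<le> 1"
        using aeM by eventually_elim (use \<psi>nn in \<open>simp add: G_def\<close>)
    qed (rule Gmeas)
    have T: "((\<lambda>n. \<integral>s. f n s \<partial>M) has_sum (\<integral>s. G s \<partial>M)) (vecs q)"
      by (rule tonelli_hs[OF countable_vecs fmeas Gmeas ae Gi])
    have i1: "(\<integral>s. f n s \<partial>M) = sub_pmf q k lam \<mu> t n * E n" for n
      unfolding f_def sub_pmf_def M_def by simp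
    have i2: "(\<integral>s. G s \<partial>M) = exp (- t * S)"
    proof -
      have "(\<integral>s. G s \<partial>M) = (\<integral>s. exp (- \<psi> * s) \<partial>(\<mu> t))" unfolding G_def M_def by (simp add: mult.commute)
      also have "\<dots> = exp (- \<delta> * t * (sqrt (2 * \<psi> + \<gamma>\<^sup>2) - \<gamma>))" by (rule assms(9)[OF t \<psi>nn])
      also have "\<dots> = exp (- t * S)" unfolding S_def by (simp add: algebra_simps)
      finally show ?thesis .
    qed
    have h3b: "((\<lambda>n. sub_pmf q k lam \<mu> t n * exp (- (\<Sum>i<q. u i * real (n i)))) has_sum exp (- t * S)) (vecs q)"
      using T unfolding i1 i2 E_def .
    show "\<exists>S. ((\<lambda>n. (1 - exp (- (\<Sum>i<q. u i * real (n i)))) * levyX q k lam \<delta> \<gamma> (\<lambda>i. {n i})) has_sum S) (posvecs q)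
           \<and> ((\<lambda>n. sub_pmf q k lam \<mu> t n * exp (- (\<Sum>i<q. u i * real (n i)))) has_sum exp (- t * S)) (vecs q)"
      using h3a' h3b by blast
  qed
qed

end
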